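(* Let $g:(0,\infty)\to(0,\infty)$ decrease monotonically to zero, let $k\in\mathbb N$ with $k\ge2$, and let $\mathfrak N=\{e\in\mathfrak E_d: 0\in e\}$. If there exist $\epsilon>0$ and $n^*\in\mathbb N$ such that $\Lambda_g(n)/\log\log n\ge k+\epsilon$ for all $n\ge n^*$, then for every $A\in\{A_{1,k},\dots,A_{k,k}\}$ $$\mathbb P\Big[\limsup_{n\to\infty}\bigcap_{z\in B_n\cap A}J_{g(n)}(\mathfrak N\circ\tau_z)\Big]=0,$$ i.e., $\mathbb P$-a.s. for $n$ large enough there is a site $z_n\in B_n\cap A$ all of whose incident edges have conductance $\le g(n)$. Consequently, $\mathbb P$-a.s. for $n$ large enough there exist $k$ distinct sites $z_{(1,n)},\dots,z_{(k,n)}\in B_n$ with $\pi_{z_{(i,n)}}\le 2d\,g(n)$ for all $i\le k$.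
   Context: Let $d\ge2$, $\mathfrak E_d$ the nearest-neighbour edges of $\mathbb Z^d$, $x\sim y$ if $|x-y|_1=1$. Conductances $(w_e)_{e\in\mathfrak E_d}$ are i.i.d. $(0,\infty)$-valued with law $\mathbb P$; $w$ a generic copy. $B_n=[-n,n]^d\cap\mathbb Z^d$, $\pi_x=\sum_{y\sim x}w_{xy}$, $\Lambda_g(u)=u^d\,\mathbb P[w\le g(u)]^{2d}$. $J_\alpha(\mathfrak A)=\{\exists e\in\mathfrak A: w_e>\alpha\}$; $\mathfrak A\circ\tau_z=\{\{x+z,y+z\}:\{x,y\}\in\mathfrak A\}$. For $1\le i\le k$, $A_{i,k}=\{z\in\mathbb Z^d: z_1+\dots+z_d\equiv i \bmod k\}$. $\limsup_n E_n=\bigcap_n\bigcup_{k\ge n}E_k$. *)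

theory Defs
  imports "HOL-Probability.Probability"
begin

text \<open>Sites of Z^d are functions from a finite index type 'd (with CARD('d) = d) to int.
  Nearest-neighbour edges are the unordered pairs {x,y} with |x-y|_1 = 1.\<close>

definition nbr :: "('d::finite \<Rightarrow> int) \<Rightarrow> ('d \<Rightarrow> int) \<Rightarrow> bool" where
  "nbr x y \<longleftrightarrow> (\<Sum>i\<in>UNIV. \<bar>x i - y i\<bar>) = 1"

definition edges :: "('d::finite \<Rightarrow> int) set set" where
  "edges = {{x, y} | x y. nbr x y}"

definition box :: "nat \<Rightarrow> ('d::finite \<Rightarrow> int) set" where
  "box n = {z. \<forall>i. \<bar>z i\<bar> \<le> int n}"

definition pi_site :: "(('d::finite \<Rightarrow> int) set \<Rightarrow> real) \<Rightarrow> ('d \<Rightarrow> int) \<Rightarrow> real" where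
  "pi_site w x = (\<Sum>y\<in>{y. nbr x y}. w {x, y})"

definition Lambda :: "real measure \<Rightarrow> (real \<Rightarrow> real) \<Rightarrow> nat \<Rightarrow> real \<Rightarrow> real" where
  "Lambda W g d u = u ^ d * (measure W {..g u}) ^ (2 * d)"

definition J :: "real \<Rightarrow> ('d::finite \<Rightarrow> int) set set \<Rightarrow> (('d \<Rightarrow> int) set \<Rightarrow> real) \<Rightarrow> bool" where
  "J \<alpha> A w \<longleftrightarrow> (\<exists>e\<in>A. w e > \<alpha>)"

definition shift_edges :: "('d::finite \<Rightarrow> int) set set \<Rightarrow> ('d \<Rightarrow> int) \<Rightarrow> ('d \<Rightarrow> int) set set" where
  "shift_edges A z = {{(\<lambda>j. x j + z j), (\<lambda>j. y j + z j)} | x y. {x, y} \<in> A}"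

definition origin_edges :: "('d::finite \<Rightarrow> int) set set" where
  "origin_edges = {e \<in> edges. (\<lambda>_. (0::int)) \<in> e}"

definition Aclass :: "nat \<Rightarrow> nat \<Rightarrow> ('d::finite \<Rightarrow> int) set" where
  "Aclass i k = {z. (\<Sum>j\<in>UNIV. z j) mod int k = int i mod int k}"

end

theory Submission
  imports Defs
begin


lemma nbr_char:
  fixes x y :: "'d::finite \<Rightarrow> int"
  shows "nbr x y \<longleftrightarrow> (\<exists>i s. (s = 1 \<or> s = -1) \<and> y = x(i := x i + s))"
proof
  assume h: "nbr x y"
  define a where "a j = \<bar>x j - y j\<bar>" for j
  have s1: "sum a UNIV = 1" using h by (simp add: nbr_def a_def)
  have nn: "\<And>j. a j \<ge> 0" by (simp add: a_def)
  obtain i where ai: "a i \<noteq> 0"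
  proof (rule ccontr)
    assume "\<not> thesis"
    then have "\<And>j. a j = 0" using that by blast
    then show False using s1 by simp
  qed
  have split: "sum a UNIV = a i + sum a (UNIV - {i})"
    by (simp add: sum.remove)
  have r0: "sum a (UNIV - {i}) \<ge> 0" by (intro sum_nonneg nn)
  have "a i = 1" using ai nn[of i] split s1 r0 by linarith
  then have "sum a (UNIV - {i}) = 0" using split s1 by linarith
  then have z: "\<And>j. j \<noteq> i \<Longrightarrow> a j = 0"
    using sum_nonneg_eq_0_iff[of "UNIV - {i}" a] nn by auto
  show "\<exists>i s. (s = 1 \<or> s = -1) \<and> y = x(i := x i + s)"
  proof (intro exI conjI)
    show "y i - x i = 1 \<or> y i - x i = -1" using \<open>a i = 1\<close> by (auto simp: a_def abs_if split: if_splits)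
    show "y = x(i := x i + (y i - x i))"
      using z by (auto simp: a_def fun_eq_iff)
  qed
next
  assume "\<exists>i s. (s = 1 \<or> s = -1) \<and> y = x(i := x i + s)"
  then obtain i s where s: "s = 1 \<or> s = -1" and y: "y = x(i := x i + s)" by blast
  have eq: "(\<lambda>j. \<bar>x j - y j\<bar>) = (\<lambda>j. if j = i then 1 else 0)"
    using s by (auto simp: y fun_eq_iff)
  show "nbr x y" unfolding nbr_def eq by simp
qed

lemma nbr_sym: "nbr x y \<longleftrightarrow> nbr y x"
  unfolding nbr_def by (simp add: abs_minus_commute)

lemma nbr_shift: "nbr (\<lambda>j. x j + z j) (\<lambda>j. y j + z j) \<longleftrightarrow> nbr x y"
  unfolding nbr_def by simp

lemma nbr_set_sub:
  fixes x :: "'d::finite \<Rightarrow> int"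
  shows "{y. nbr x y} \<subseteq> (\<lambda>(i,s). x(i := x i + s)) ` (UNIV \<times> {1,-1})"
  using nbr_char[of x] by force

lemma nbr_finite: "finite {y. nbr (x::'d::finite \<Rightarrow> int) y}"
  by (rule finite_subset[OF nbr_set_sub]) auto

lemma nbr_card: "card {y. nbr (x::'d::finite \<Rightarrow> int) y} \<le> 2 * CARD('d)"
proof -
  have "card {y. nbr x y} \<le> card ((\<lambda>(i,s). x(i := x i + s)) ` (UNIV \<times> {1::int,-1}))"
    by (rule card_mono[OF _ nbr_set_sub]) auto
  also have "\<dots> \<le> card (UNIV \<times> {1::int,-1} :: ('d \<times> int) set)" by (rule card_image_le) auto
  also have "\<dots> = 2 * CARD('d)" by (simp add: card_cartesian_product)
  finally show ?thesis .
qed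

lemma nbr_sum:
  fixes x y :: "'d::finite \<Rightarrow> int"
  assumes "nbr x y"
  shows "(\<Sum>j\<in>UNIV. y j) = (\<Sum>j\<in>UNIV. x j) + 1 \<or> (\<Sum>j\<in>UNIV. y j) = (\<Sum>j\<in>UNIV. x j) - 1"
proof -
  obtain i s where s: "s = 1 \<or> s = -1" and y: "y = x(i := x i + s)" using assms nbr_char by blast
  have "(\<Sum>j\<in>UNIV. y j) = (\<Sum>j\<in>UNIV. x j + (if j = i then s else 0))"
    by (intro sum.cong) (auto simp: y)
  also have "\<dots> = (\<Sum>j\<in>UNIV. x j) + s" by (simp add: sum.distrib)
  finally show ?thesis using s by auto
qed

abbreviation star :: "('d::finite \<Rightarrow> int) \<Rightarrow> ('d \<Rightarrow> int) set set" where
  "star z \<equiv> shift_edges origin_edges z"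

lemma star_eq: "star z = (\<lambda>y. {z, y}) ` {y. nbr z y}"
proof (rule set_eqI)
  fix e
  show "e \<in> star z \<longleftrightarrow> e \<in> (\<lambda>y. {z, y}) ` {y. nbr z y}"
  proof
    assume "e \<in> star z"
    then obtain x y where e: "e = {(\<lambda>j. x j + z j), (\<lambda>j. y j + z j)}" and xy: "{x, y} \<in> origin_edges"
      unfolding shift_edges_def by blast
    from xy obtain a b where ab: "{x,y} = {a,b}" "nbr a b" and o: "(\<lambda>_. 0) \<in> {x,y}"
      unfolding origin_edges_def edges_def by blast
    have nxy: "nbr x y" using ab by (auto simp: doubleton_eq_iff nbr_sym)
    show "e \<in> (\<lambda>y. {z, y}) ` {y. nbr z y}"
    proof (cases "x = (\<lambda>_. 0)")
      case True
      have "nbr z (\<lambda>j. y j + z j)" using nxy nbr_shift[of x z y] True by simp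
      then show ?thesis using e True by (auto simp: image_iff)
    next
      case False
      then have "y = (\<lambda>_. 0)" using o by auto
      have "nbr z (\<lambda>j. x j + z j)" using nxy nbr_shift[of y z x] \<open>y = _\<close> nbr_sym by auto
      then show ?thesis using e \<open>y = _\<close> by (auto simp: image_iff insert_commute)
    qed
  next
    assume "e \<in> (\<lambda>y. {z, y}) ` {y. nbr z y}"
    then obtain y where e: "e = {z, y}" and n: "nbr z y" by blast
    define y' where "y' = (\<lambda>j. y j - z j)"
    have n0: "nbr (\<lambda>_. 0) y'"
      using n nbr_shift[of "\<lambda>_. 0" z y'] by (simp add: y'_def)
    have "{(\<lambda>_. 0), y'} \<in> origin_edges"
      using n0 unfolding origin_edges_def edges_def by blast
    moreover have "e = {(\<lambda>j. (\<lambda>_. 0::int) j + z j), (\<lambda>j. y' j + z j)}"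
      by (simp add: e y'_def)
    ultimately show "e \<in> star z" unfolding shift_edges_def
      by (intro CollectI exI[of _ "\<lambda>_. 0::int"] exI[of _ y'] conjI)
  qed
qed

lemma star_edges: "star z \<subseteq> edges"
  unfolding star_eq edges_def by blast

lemma star_finite: "finite (star z)"
  unfolding star_eq by (intro finite_imageI nbr_finite)

lemma star_card: "card (star (z::'d::finite \<Rightarrow> int)) \<le> 2 * CARD('d)"
  unfolding star_eq using card_image_le[OF nbr_finite, of "\<lambda>y. {z,y}" z] nbr_card[of z] by linarith

lemma star_mem: "nbr z y \<Longrightarrow> {z, y} \<in> star z"
  unfolding star_eq by blast

lemma star_disj:
  assumes k: "k \<ge> 2" and z: "z \<in> Aclass i k" and z': "z' \<in> Aclass i k" and ne: "z \<noteq> z'"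
  shows "star z \<inter> star z' = {}"
proof (rule ccontr)
  assume "star z \<inter> star z' \<noteq> {}"
  then obtain y y' where "nbr z y" "nbr z' y'" "{z,y} = {z',y'}" unfolding star_eq by blast
  then have "nbr z z'" using ne by (auto simp: doubleton_eq_iff)
  from nbr_sum[OF this] have h: "(\<Sum>j\<in>UNIV. z' j) = (\<Sum>j\<in>UNIV. z j) + 1 \<or> (\<Sum>j\<in>UNIV. z' j) = (\<Sum>j\<in>UNIV. z j) - 1" .
  have m: "(\<Sum>j\<in>UNIV. z j) mod int k = (\<Sum>j\<in>UNIV. z' j) mod int k"
    using z z' by (simp add: Aclass_def)
  have d: "int k dvd ((\<Sum>j\<in>UNIV. z j) - (\<Sum>j\<in>UNIV. z' j))" using m by (simp add: mod_eq_dvd_iff)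
  have "int k dvd 1"
  proof (cases "(\<Sum>j\<in>UNIV. z' j) = (\<Sum>j\<in>UNIV. z j) + 1")
    case True then show ?thesis using d by simp
  next
    case False then have "(\<Sum>j\<in>UNIV. z' j) = (\<Sum>j\<in>UNIV. z j) - 1" using h by blast
    then show ?thesis using d by simp
  qed
  then show False using k by simp
qed



lemma box_eq: "box n = PiE UNIV (\<lambda>_. {-int n..int n})"
  by (auto simp: box_def PiE_UNIV_domain Pi_iff abs_le_iff minus_le_iff)

lemma box_finite: "finite (box n :: ('d::finite \<Rightarrow> int) set)"
  unfolding box_eq by (intro finite_PiE) auto

lemma box_mono: "n \<le> m \<Longrightarrow> box n \<subseteq> box m"
proof
  fix z :: "'d::finite \<Rightarrow> int" assume "n \<le> m" "z \<in> box n"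
  then have "int n \<le> int m" "\<And>j. \<bar>z j\<bar> \<le> int n" by (auto simp: box_def)
  then have "\<bar>z j\<bar> \<le> int m" for j by (meson order_trans)
  then show "z \<in> box m" unfolding box_def by blast
qed

lemma card_box_class:
  assumes k: "k \<ge> 1"
  shows "(2*n+1)^(CARD('d) - 1) * ((2*n+1) div k) \<le> card (box n \<inter> Aclass i k :: ('d::finite \<Rightarrow> int) set)"
proof -
  obtain j0 :: 'd where True by blast
  define m where "m = (2*n+1) div k"
  define F where "F j = (if j = j0 then {0..<int m} else {-int n..int n})" for j :: 'd
  define D where "D = PiE UNIV F"
  define s where "s f = (\<Sum>j\<in>UNIV-{j0}. f j)" for f :: "'d \<Rightarrow> int"
  define \<Phi> where "\<Phi> f = f(j0 := - int n + int k * f j0 + (int i + int n - s f) mod int k)" for f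
  have aux: "nat (2*int n+1) = 2*n+1"
  proof -
    have "2*int n+1 = int (2*n+1)" by simp
    then show ?thesis by (simp only: nat_int)
  qed
  have cardF: "card (F j) = (if j = j0 then m else 2*n+1)" for j
    by (simp add: F_def aux)
  have "card D = (\<Prod>j\<in>UNIV. card (F j))" by (simp add: D_def card_PiE)
  also have "\<dots> = (\<Prod>j\<in>UNIV. (if j = j0 then m else 2*n+1))" by (simp add: cardF)
  also have "\<dots> = m * (\<Prod>j\<in>UNIV-{j0}. (if j = j0 then m else 2*n+1))"
    by (simp add: prod.remove[of UNIV j0])
  also have "(\<Prod>j\<in>UNIV-{j0}. (if j = j0 then m else 2*n+1)) = (\<Prod>j\<in>UNIV-{j0}. 2*n+1)"
    by (intro prod.cong) auto
  also have "\<dots> = (2*n+1)^(CARD('d) - 1)" by (simp add: card_Diff_singleton)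
  finally have cD: "card D = (2*n+1)^(CARD('d) - 1) * m" by simp
  have Dmem: "f \<in> D \<longleftrightarrow> (\<forall>j. f j \<in> F j)" for f by (simp add: D_def PiE_UNIV_domain Pi_iff)
  have inj: "inj_on \<Phi> D"
  proof (rule inj_onI)
    fix f f' assume f: "f \<in> D" and f': "f' \<in> D" and e: "\<Phi> f = \<Phi> f'"
    have o: "f j = f' j" if "j \<noteq> j0" for j
      using fun_cong[OF e, of j] that by (simp add: \<Phi>_def)
    have "s f = s f'" unfolding s_def by (intro sum.cong) (auto simp: o)
    then have "int k * f j0 = int k * f' j0"
      using fun_cong[OF e, of j0] by (simp add: \<Phi>_def)
    then have "f j0 = f' j0" using k by simp
    show "f = f'"
    proof (rule ext)
      fix j show "f j = f' j" using o \<open>f j0 = f' j0\<close> by (cases "j = j0") auto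
    qed
  qed
  have img: "\<Phi> ` D \<subseteq> box n \<inter> Aclass i k"
  proof
    fix z assume "z \<in> \<Phi> ` D"
    then obtain f where f: "f \<in> D" and z: "z = \<Phi> f" by blast
    define r where "r = (int i + int n - s f) mod int k"
    have r: "0 \<le> r" "r < int k" using k by (simp_all add: r_def)
    have t: "0 \<le> f j0" "f j0 \<le> int m - 1" using f by (auto simp: Dmem F_def dest: spec[of _ j0])
    have km: "int k * int m \<le> 2 * int n + 1"
    proof -
      have "k * m \<le> 2*n+1" by (simp add: m_def)
      then show ?thesis by (metis of_nat_le_iff of_nat_mult of_nat_Suc of_nat_add of_nat_mult mult_2 Suc_eq_plus1 of_nat_1)
    qed
    have kt: "int k * f j0 \<le> int k * (int m - 1)" using t(2) by (intro mult_left_mono) auto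
    have kt0: "0 \<le> int k * f j0" using t(1) by simp
    have zj0: "z j0 = - int n + int k * f j0 + r" by (simp add: z \<Phi>_def r_def)
    have "\<bar>z j0\<bar> \<le> int n"
      using zj0 r kt kt0 km by (simp add: algebra_simps abs_le_iff) linarith?
    moreover have "\<bar>z j\<bar> \<le> int n" if "j \<noteq> j0" for j
      using f that by (auto simp: z \<Phi>_def Dmem F_def dest!: spec[of _ j])
    ultimately have "\<bar>z j\<bar> \<le> int n" for j by (cases "j = j0") auto
    then have "z \<in> box n" unfolding box_def by blast
    moreover have "z \<in> Aclass i k"
    proof -
      have zs: "(\<Sum>j\<in>UNIV. z j) = z j0 + s f"
      proof -
        have "(\<Sum>j\<in>UNIV. z j) = z j0 + (\<Sum>j\<in>UNIV-{j0}. z j)" by (simp add: sum.remove)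
        also have "(\<Sum>j\<in>UNIV-{j0}. z j) = s f" unfolding s_def by (intro sum.cong) (auto simp: z \<Phi>_def)
        finally show ?thesis .
      qed
      have "(z j0 + s f) mod int k = (r + (s f - int n + int k * f j0)) mod int k"
        by (simp add: zj0 algebra_simps)
      also have "\<dots> = ((int i + int n - s f) + (s f - int n + int k * f j0)) mod int k"
        unfolding r_def by (simp add: mod_add_left_eq)
      also have "\<dots> = (int i + int k * f j0) mod int k" by (simp add: algebra_simps)
      also have "\<dots> = int i mod int k" by simp
      finally show ?thesis unfolding Aclass_def using zs by simp
    qed
    ultimately show "z \<in> box n \<inter> Aclass i k" by blast
  qed
  have "card D = card (\<Phi> ` D)" using inj by (simp add: card_image)
  also have "\<dots> \<le> card (box n \<inter> Aclass i k :: ('d \<Rightarrow> int) set)"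
    by (rule card_mono[OF _ img]) (simp add: box_finite)
  finally show ?thesis using cD m_def by simp
qed



lemma star_nonempty: "star (z::'d::finite \<Rightarrow> int) \<noteq> {}"
proof -
  obtain j :: 'd where True by blast
  have "nbr z (z(j := z j + 1))" using nbr_char[of z] by blast
  then show ?thesis using star_mem by blast
qed

lemma (in prob_space) ev_meas:
  fixes w :: "('d::finite \<Rightarrow> int) set \<Rightarrow> 'a \<Rightarrow> real"
  assumes meas: "\<And>e. e \<in> edges \<Longrightarrow> w e \<in> borel_measurable M" and S: "finite S"
  shows "{x\<in>space M. \<forall>z\<in>S. \<exists>e\<in>star z. t < w e x} \<in> events"
proof (rule sets.sets_Collect_finite_All[OF _ S])
  fix z assume "z \<in> S"
  show "{x\<in>space M. \<exists>e\<in>star z. t < w e x} \<in> events"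
  proof (rule sets.sets_Collect_finite_Ex[OF _ star_finite])
    fix e assume "e \<in> star z"
    then have "w e \<in> borel_measurable M" using meas star_edges by blast
    then have "w e -` {t<..} \<inter> space M \<in> events" by (rule measurable_sets) auto
    moreover have "{x\<in>space M. t < w e x} = w e -` {t<..} \<inter> space M" by auto
    ultimately show "{x\<in>space M. t < w e x} \<in> events" by simp
  qed
qed

lemma (in prob_space) star_prob_bound:
  fixes w :: "('d::finite \<Rightarrow> int) set \<Rightarrow> 'a \<Rightarrow> real"
  assumes indep: "indep_vars (\<lambda>_. borel) w edges"
    and law: "\<And>e. e \<in> edges \<Longrightarrow> distr M borel (w e) = W"
    and k: "k \<ge> 2" and S: "finite S" "S \<noteq> {}" "S \<subseteq> Aclass i k"
  shows "prob {x\<in>space M. \<forall>z\<in>S. \<exists>e\<in>star z. t < w e x}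
           \<le> exp (- real (card S) * (measure W {..t})^(2*CARD('d)))"
proof -
  define F where "F e = {w e -` A \<inter> space M | A. A \<in> sets borel}" for e
  define q where "q = measure W {..t}"
  have rv: "\<And>e. e \<in> edges \<Longrightarrow> w e \<in> borel_measurable M"
    using indep unfolding indep_vars_def2 by auto
  have iF: "indep_sets F edges" using indep unfolding indep_vars_def2 F_def by auto
  have Fm: "w e -` A \<inter> space M \<in> F e" if "A \<in> sets borel" for e A
    using that unfolding F_def by blast
  have qe: "prob {x\<in>space M. w e x \<le> t} = q" if e: "e \<in> edges" for e
  proof -
    have "q = measure (distr M borel (w e)) {..t}" using law[OF e] by (simp add: q_def)
    also have "\<dots> = prob (w e -` {..t} \<inter> space M)" by (rule measure_distr[OF rv[OF e]]) auto
    also have "w e -` {..t} \<inter> space M = {x\<in>space M. w e x \<le> t}" by auto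
    finally show ?thesis by simp
  qed
  obtain z0 where "z0 \<in> S" using S by blast
  obtain e0 where e0: "e0 \<in> star z0" using star_nonempty by blast
  have e0E: "e0 \<in> edges" using e0 star_edges by blast
  have q01: "0 \<le> q" "q \<le> 1" using qe[OF e0E] by auto
  define X where "X z = {x\<in>space M. \<exists>e\<in>star z. t < w e x}" for z
  define Y where "Y z = {x\<in>space M. \<forall>e\<in>star z. w e x \<le> t}" for z
  have Xe: "X z \<in> events" for z
    using ev_meas[OF rv, where S="{z}" and t=t] by (simp add: X_def)
  have XY: "X z = space M - Y z" for z by (auto simp: X_def Y_def not_le)
  have Yprob: "prob (Y z) = q ^ card (star z)" for z
  proof -
    have "Y z = (\<Inter>e\<in>star z. w e -` {..t} \<inter> space M)"
      using star_nonempty[of z] by (auto simp: Y_def)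
    also have "prob \<dots> = (\<Prod>e\<in>star z. prob (w e -` {..t} \<inter> space M))"
      by (rule indep_setsD[OF iF star_edges star_nonempty star_finite]) (auto intro: Fm)
    also have "\<dots> = (\<Prod>e\<in>star z. q)"
    proof (rule prod.cong[OF refl])
      fix e assume "e \<in> star z"
      then have "e \<in> edges" using star_edges by blast
      moreover have "w e -` {..t} \<inter> space M = {x\<in>space M. w e x \<le> t}" by auto
      ultimately show "prob (w e -` {..t} \<inter> space M) = q" using qe by simp
    qed
    finally show ?thesis by simp
  qed
  have Xprob: "prob (X z) \<le> exp (- (q ^ (2*CARD('d))))" for z
  proof -
    have "Y z = space M - X z" by (auto simp: X_def Y_def not_le)
    then have "Y z \<in> events" using Xe by auto
    then have "prob (X z) = 1 - q ^ card (star z)" using XY Yprob prob_compl by simp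
    also have "\<dots> \<le> 1 - q ^ (2*CARD('d))"
      using power_decreasing[OF star_card[of z] q01] by simp
    also have "\<dots> \<le> exp (- (q ^ (2*CARD('d))))"
      using exp_ge_add_one_self[of "- (q ^ (2*CARD('d)))"] by simp
    finally show ?thesis .
  qed
  have Xindep: "indep_sets (\<lambda>z. sigma_sets (space M) (\<Union>e\<in>star z. F e)) S"
  proof (rule indep_sets_collect_sigma)
    show "indep_sets F (\<Union>z\<in>S. star z)"
      by (rule indep_sets_mono_index[OF _ iF]) (use star_edges in blast)
    show "Int_stable (F e)" for e
      unfolding F_def Int_stable_def
      apply auto
      apply (rule_tac x="A \<inter> Aa" in exI)
      apply auto
      done
    show "disjoint_family_on star S"
      unfolding disjoint_family_on_def using star_disj[OF k] S(3) by blast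
  qed
  have XG: "X z \<in> sigma_sets (space M) (\<Union>e\<in>star z. F e)" for z
  proof -
    have sub: "(\<Union>e\<in>star z. F e) \<subseteq> Pow (space M)" unfolding F_def by auto
    interpret sa: sigma_algebra "space M" "sigma_sets (space M) (\<Union>e\<in>star z. F e)"
      by (rule sigma_algebra_sigma_sets[OF sub])
    have "X z = (\<Union>e\<in>star z. w e -` {t<..} \<inter> space M)" by (auto simp: X_def)
    also have "\<dots> \<in> sigma_sets (space M) (\<Union>e\<in>star z. F e)"
    proof (rule sa.finite_UN[OF star_finite])
      fix e assume e: "e \<in> star z"
      have "w e -` {t<..} \<inter> space M \<in> F e" by (rule Fm) auto
      then have "w e -` {t<..} \<inter> space M \<in> (\<Union>e\<in>star z. F e)" using e by blast
      then show "w e -` {t<..} \<inter> space M \<in> sigma_sets (space M) (\<Union>e\<in>star z. F e)"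
        by (rule sigma_sets.Basic)
    qed
    finally show ?thesis .
  qed
  have "{x\<in>space M. \<forall>z\<in>S. \<exists>e\<in>star z. t < w e x} = (\<Inter>z\<in>S. X z)"
    using S(2) by (auto simp: X_def)
  then have "prob {x\<in>space M. \<forall>z\<in>S. \<exists>e\<in>star z. t < w e x} = (\<Prod>z\<in>S. prob (X z))"
    using indep_setsD[OF Xindep order_refl S(2) S(1)] XG by simp
  also have "\<dots> \<le> (\<Prod>z\<in>S. exp (- (q ^ (2*CARD('d)))))"
    by (rule prod_mono) (use Xprob in auto)
  also have "\<dots> = exp (- real (card S) * q^(2*CARD('d)))"
    by (simp add: exp_of_nat_mult[symmetric])
  finally show ?thesis by (simp add: q_def)
qed



lemma (in prob_space) main_null:
  fixes w :: "('d::finite \<Rightarrow> int) set \<Rightarrow> 'a \<Rightarrow> real" and g :: "real \<Rightarrow> real"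
  assumes indep: "indep_vars (\<lambda>_. borel) w edges"
    and law: "\<And>e. e \<in> edges \<Longrightarrow> distr M borel (w e) = W"
    and g_mono: "antimono_on {0<..} g"
    and k: "k \<ge> 2"
    and growth: "\<exists>\<epsilon>>0. \<exists>nstar::nat. \<forall>n\<ge>nstar.
                   Lambda W g CARD('d) (real n) / ln (ln (real n)) \<ge> real k + \<epsilon>"
  shows "(\<Inter>m. \<Union>n\<in>{m..}. {x\<in>space M. \<forall>z\<in>box n \<inter> Aclass i k. \<exists>e\<in>star z. g (real n) < w e x})
           \<in> null_sets M"
proof -
  define d where "d = CARD('d)"
  have d1: "d \<ge> 1" by (simp add: d_def)
  obtain \<epsilon> nstar where \<epsilon>: "\<epsilon> > 0" and gr: "\<And>n. n \<ge> nstar \<Longrightarrow>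
      Lambda W g CARD('d) (real n) / ln (ln (real n)) \<ge> real k + \<epsilon>"
    using growth by blast
  have rv: "\<And>e. e \<in> edges \<Longrightarrow> w e \<in> borel_measurable M"
    using indep unfolding indep_vars_def2 by auto
  have kpos: "real k \<ge> 2" using k by simp
  define \<beta> where "\<beta> = (real k + \<epsilon>/2) / real k"
  have \<beta>1: "\<beta> > 1" using \<epsilon> kpos by (simp add: \<beta>_def field_simps)
  define E where "E n = {x\<in>space M. \<forall>z\<in>box n \<inter> Aclass i k. \<exists>e\<in>star z. g (real n) < w e x}" for n :: nat
  define Fj where "Fj j = {x\<in>space M. \<forall>z\<in>box (2^j) \<inter> Aclass i k. \<exists>e\<in>star z. g (real ((2::nat)^(Suc j))) < w e x}" for j :: nat
  define J0 where "J0 = nstar + nat \<lceil>(real k + \<epsilon>) * real k / \<epsilon>\<rceil> + 1"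
  have Fj_ev: "Fj j \<in> events" for j
    unfolding Fj_def by (rule ev_meas) (simp_all add: rv box_finite)
  have bound: "prob (Fj j) \<le> (1/2) powr (-\<beta>) * real (Suc j) powr (-\<beta>)" if jJ: "j \<ge> J0" for j
  proof -
    define n where "n = (2::nat)^j"
    define N where "N = (2::nat)^(Suc j)"
    have Nn: "N = 2*n" by (simp add: N_def n_def)
    have jn: "j < n" unfolding n_def by (rule less_exp)
    have "real (nat \<lceil>(real k + \<epsilon>) * real k / \<epsilon>\<rceil>) < real n" using jn jJ unfolding J0_def by linarith
    moreover have "(real k + \<epsilon>) * real k / \<epsilon> \<le> real (nat \<lceil>(real k + \<epsilon>) * real k / \<epsilon>\<rceil>)"
      by linarith
    ultimately have "(real k + \<epsilon>) * real k / \<epsilon> < real n" by linarith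
    then have nbig: "(real k + \<epsilon>) * real k < \<epsilon> * real n" using \<epsilon> by (simp add: field_simps)
    have Nstar: "nstar \<le> N" using jn jJ unfolding J0_def Nn by linarith
    have j1: "1 \<le> j" using jJ unfolding J0_def by linarith
    define S where "S = (box n \<inter> Aclass i k :: ('d \<Rightarrow> int) set)"
    define q where "q = measure W {..g (real N)}"
    define D where "D = (2*n+1) div k"
    have cS: "(2*n+1)^(d-1) * D \<le> card S"
      unfolding S_def D_def d_def by (rule card_box_class) (use k in simp)
    have kD: "2*n+2 \<le> k * D + k"
    proof -
      have "D * k + (2*n+1) mod k = 2*n+1" unfolding D_def by (rule div_mult_mod_eq)
      moreover have "(2*n+1) mod k < k" using k by simp
      ultimately show ?thesis by (simp add: mult.commute)
    qed
    have kn: "real k < real n"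
    proof -
      show ?thesis
      proof (rule ccontr)
        assume "\<not> real k < real n"
        then have "real n \<le> real k" by simp
        then have "\<epsilon> * real n \<le> \<epsilon> * real k" using \<epsilon> by simp
        also have "\<dots> < (real k + \<epsilon>) * real k" using kpos \<epsilon> by (simp add: algebra_simps)
        finally show False using nbig by simp
      qed
    qed
    have D1: "1 \<le> D"
    proof -
      have "k \<le> 2*n+1" using kn by simp
      then have "k div k \<le> (2*n+1) div k" by (rule div_le_mono)
      then show ?thesis using k by (simp add: D_def)
    qed
    have cS1: "1 \<le> card S"
    proof -
      have "1 \<le> (2*n+1)^(d-1) * D" using D1 by simp
      then show ?thesis using cS by linarith
    qed
    have Sfin: "finite S" by (simp add: S_def box_finite)
    have Sne: "S \<noteq> {}" using cS1 by auto
    have Ssub: "S \<subseteq> Aclass i k" by (simp add: S_def)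
    have card_real: "(real k + \<epsilon>/2) * real N ^ d \<le> real k * (real k + \<epsilon>) * real (card S)"
    proof -
      have r1: "(2 * real n) ^ (d-1) * real D \<le> real (card S)"
      proof -
        have "(2 * real n) ^ (d-1) \<le> (2 * real n + 1) ^ (d-1)" by (intro power_mono) auto
        then have "(2 * real n) ^ (d-1) * real D \<le> (2 * real n + 1) ^ (d-1) * real D"
          by (intro mult_right_mono) auto
        also have "\<dots> = real ((2*n+1)^(d-1) * D)" by (simp add: add.commute)
        also have "\<dots> \<le> real (card S)" using cS by linarith
        finally show ?thesis .
      qed
      have r2: "(real k + \<epsilon>/2) * (2 * real n) \<le> (real k + \<epsilon>) * (real k * real D)"
      proof -
        have "real (2*n+2) \<le> real (k * D + k)" using kD by (subst of_nat_le_iff)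
        then have "2 * real n + 2 \<le> real k * real D + real k" by simp
        then have "(real k + \<epsilon>) * (2 * real n + 2 - real k) \<le> (real k + \<epsilon>) * (real k * real D)"
          using \<epsilon> kpos by (intro mult_left_mono) auto
        moreover have "(real k + \<epsilon>/2) * (2 * real n) \<le> (real k + \<epsilon>) * (2 * real n + 2 - real k)"
        proof -
          have e1: "(real k + \<epsilon>) * (2 * real n + 2 - real k) = 2*real k*real n + 2*\<epsilon>*real n + 2*real k + 2*\<epsilon> - real k*real k - \<epsilon>*real k"
            by (simp add: algebra_simps)
          have e2: "(real k + \<epsilon>/2) * (2*real n) = 2*real k*real n + \<epsilon>*real n" by (simp add: algebra_simps)
          have nb: "real k*real k + \<epsilon>*real k < \<epsilon>*real n" using nbig by (simp add: algebra_simps)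
          show ?thesis unfolding e1 e2 using nb kpos \<epsilon> by linarith
        qed
        ultimately show ?thesis by linarith
      qed
      have "(real k + \<epsilon>/2) * real N ^ d = ((real k + \<epsilon>/2) * (2 * real n)) * (2 * real n) ^ (d-1)"
      proof -
        have "real N ^ d = (2 * real n) ^ (Suc (d-1))" using d1 by (simp add: Nn)
        then show ?thesis by (simp add: algebra_simps)
      qed
      also have "\<dots> \<le> ((real k + \<epsilon>) * (real k * real D)) * (2 * real n) ^ (d-1)"
        by (intro mult_right_mono r2) auto
      also have "\<dots> = real k * (real k + \<epsilon>) * ((2 * real n) ^ (d-1) * real D)" by (simp add: algebra_simps)
      also have "\<dots> \<le> real k * (real k + \<epsilon>) * real (card S)"
        using r1 \<epsilon> kpos by (intro mult_left_mono) auto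
      finally show ?thesis .
    qed
    have lnN: "ln (real N) = real (Suc j) * ln 2"
    proof -
      have "real N = (2::real) ^ Suc j" by (simp add: N_def)
      then show ?thesis using ln_realpow[of "2::real" "Suc j"] by simp
    qed
    have ln2: "2/3 \<le> ln (2::real)" by (rule ln2_ge_two_thirds)
    have lnN1: "ln (real N) > 1"
    proof -
      have "real (Suc j) \<ge> 2" using j1 by simp
      then have "real (Suc j) * ln 2 \<ge> 2 * (2/3)" using ln2 by (intro mult_mono) auto
      then show ?thesis using lnN by simp
    qed
    have llpos: "ln (ln (real N)) > 0" using lnN1 by simp
    have Lam: "(real k + \<epsilon>) * ln (ln (real N)) \<le> real N ^ d * q ^ (2*d)"
    proof -
      have "real k + \<epsilon> \<le> Lambda W g CARD('d) (real N) / ln (ln (real N))" by (rule gr[OF Nstar])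
      then have "(real k + \<epsilon>) * ln (ln (real N)) \<le> Lambda W g CARD('d) (real N)"
        using llpos by (simp add: pos_le_divide_eq)
      then show ?thesis by (simp add: Lambda_def q_def d_def)
    qed
    have q0: "0 \<le> q ^ (2*d)" unfolding q_def by simp
    have key: "\<beta> * ln (ln (real N)) \<le> real (card S) * q ^ (2*d)"
    proof -
      have kk: "real k * (real k + \<epsilon>) > 0" using kpos \<epsilon> by simp
      have "\<beta> * ln (ln (real N)) * (real k * (real k + \<epsilon>)) = (real k + \<epsilon>/2) * ((real k + \<epsilon>) * ln (ln (real N)))"
        using kpos by (simp add: \<beta>_def field_simps)
      also have "\<dots> \<le> (real k + \<epsilon>/2) * (real N ^ d * q ^ (2*d))"
        using Lam \<epsilon> kpos by (intro mult_left_mono) auto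
      also have "\<dots> = ((real k + \<epsilon>/2) * real N ^ d) * q ^ (2*d)" by (simp add: algebra_simps)
      also have "\<dots> \<le> (real k * (real k + \<epsilon>) * real (card S)) * q ^ (2*d)"
        using card_real q0 by (intro mult_right_mono) auto
      also have "\<dots> = (real (card S) * q ^ (2*d)) * (real k * (real k + \<epsilon>))" by (simp add: algebra_simps)
      finally show ?thesis using kk by (rule mult_right_le_imp_le)
    qed
    have "Fj j = {x\<in>space M. \<forall>z\<in>S. \<exists>e\<in>star z. g (real N) < w e x}"
      by (simp add: Fj_def S_def n_def N_def)
    then have "prob (Fj j) \<le> exp (- real (card S) * q ^ (2*d))"
      using star_prob_bound[OF indep law k Sfin Sne Ssub, where t="g (real N)"] by (simp add: S_def q_def d_def)
    also have "\<dots> \<le> exp (- (\<beta> * ln (ln (real N))))" using key by simp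
    also have "\<dots> = ln (real N) powr (-\<beta>)" using lnN1 by (simp add: powr_def)
    also have "\<dots> \<le> (real (Suc j) / 2) powr (-\<beta>)"
    proof (rule powr_mono2')
      show "- \<beta> \<le> 0" using \<beta>1 by simp
      show "0 < real (Suc j) / 2" by simp
      have "real (Suc j) * (1/2) \<le> real (Suc j) * ln 2" using ln2 by (intro mult_left_mono) auto
      then show "real (Suc j) / 2 \<le> ln (real N)" using lnN by simp
    qed
    also have "\<dots> = (1/2) powr (-\<beta>) * real (Suc j) powr (-\<beta>)"
      using powr_mult[of "1/2" "real (Suc j)" "-\<beta>"] by simp
    finally show ?thesis .
  qed
  have summ0: "summable (\<lambda>j. real (Suc j) powr (-\<beta>))"
    using summable_Suc_iff[of "\<lambda>n. real n powr (-\<beta>)"] summable_real_powr_iff[of "-\<beta>"] \<beta>1 by simp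
  have summ: "summable (\<lambda>j. prob (Fj j))"
  proof (rule summable_comparison_test'[where N=J0])
    show "summable (\<lambda>j. (1/2) powr (-\<beta>) * real (Suc j) powr (-\<beta>))"
      by (rule summable_mult[OF summ0])
    show "norm (prob (Fj j)) \<le> (1/2) powr (-\<beta>) * real (Suc j) powr (-\<beta>)" if "J0 \<le> j" for j
      using bound[OF that] by simp
  qed
  have null: "limsup Fj \<in> null_sets M"
    by (rule borel_cantelli_limsup1[OF Fj_ev _ summ]) (simp add: less_top[symmetric])
  have Eev: "E n \<in> events" for n
    unfolding E_def by (rule ev_meas) (simp_all add: rv box_finite)
  have sub: "(\<Inter>m. \<Union>n\<in>{m..}. E n) \<subseteq> limsup Fj"
  proof
    fix x assume x: "x \<in> (\<Inter>m. \<Union>n\<in>{m..}. E n)"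
    show "x \<in> limsup Fj"
      unfolding limsup_INF_SUP
    proof (rule INT_I)
      fix m :: nat
      from x have "x \<in> (\<Union>n\<in>{2^m..}. E n)" by blast
      then obtain n where n: "n \<ge> 2^m" and xE: "x \<in> E n" by blast
      have n1: "n \<ge> 1" using n by (meson le_trans one_le_power one_le_numeral)
      obtain j where j: "2^j \<le> n" "n < 2^(j+1)" using ex_power_ivl1[of 2 n] n1 by auto
      have jm: "m \<le> j"
      proof (rule ccontr)
        assume "\<not> m \<le> j"
        then have "2^(j+1) \<le> (2::nat)^m" by (intro power_increasing) auto
        then show False using j n by linarith
      qed
      have "x \<in> Fj j"
        unfolding Fj_def
      proof (intro CollectI conjI ballI)
        show "x \<in> space M" using xE by (simp add: E_def)
        fix z :: "'d \<Rightarrow> int" assume z: "z \<in> box (2^j) \<inter> Aclass i k"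
        then have "z \<in> box n \<inter> Aclass i k" using box_mono[OF j(1)] by blast
        then obtain e where e: "e \<in> star z" "g (real n) < w e x" using xE by (auto simp: E_def)
        have "g (real ((2::nat)^Suc j)) \<le> g (real n)"
        proof -
          have "n \<le> 2^Suc j" using j(2) by simp
          then have "real n \<le> real ((2::nat)^Suc j)" by (subst of_nat_le_iff)
          moreover have "real n \<in> {0<..}" "real ((2::nat)^Suc j) \<in> {0<..}" using n1 by auto
          ultimately show ?thesis using monotone_onD[OF g_mono] by blast
        qed
        then show "\<exists>e\<in>star z. g (real ((2::nat)^Suc j)) < w e x" using e by force
      qed
      then show "x \<in> (\<Union>j\<in>{m..}. Fj j)" using jm by blast
    qed
  qed
  have "(\<Inter>m. \<Union>n\<in>{m..}. E n) \<in> events"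
    using measurable_limsup[of E M, OF Eev] by (simp add: limsup_INF_SUP)
  then have "(\<Inter>m. \<Union>n\<in>{m..}. E n) \<in> null_sets M"
    by (rule null_sets_subset[OF null _ sub])
  then show ?thesis by (simp add: E_def)
qed



lemma class_inj:
  assumes "i \<in> {1..k}" "i' \<in> {1..k}" "int i mod int k = int i' mod int k"
  shows "i = i'"
proof -
  have m: "i mod k = i' mod k" using assms(3) by (metis of_nat_eq_iff zmod_int)
  have r: "a mod k = (if a = k then 0 else a)" if "a \<in> {1..k}" for a
    using that by auto
  show ?thesis using m r[OF assms(1)] r[OF assms(2)] assms(1,2) by (auto split: if_splits)
qed

theorem lemma2p5:
  fixes M :: "'a measure"
    and w :: "('d::finite \<Rightarrow> int) set \<Rightarrow> 'a \<Rightarrow> real"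
    and W :: "real measure"
    and g :: "real \<Rightarrow> real"
    and k :: nat
  assumes dim: "CARD('d) \<ge> 2"
    and M: "prob_space M"
    and indep: "prob_space.indep_vars M (\<lambda>_. borel) w edges"
    and law: "\<And>e. e \<in> edges \<Longrightarrow> distr M borel (w e) = W"
    and pos: "\<And>e x. e \<in> edges \<Longrightarrow> x \<in> space M \<Longrightarrow> w e x > 0"
    and g_pos: "\<And>u. u > 0 \<Longrightarrow> g u > 0"
    and g_mono: "antimono_on {0<..} g"
    and g_lim: "(g \<longlongrightarrow> 0) at_top"
    and k: "k \<ge> 2"
    and growth: "\<exists>\<epsilon>>0. \<exists>nstar::nat. \<forall>n\<ge>nstar.
                   Lambda W g CARD('d) (real n) / ln (ln (real n)) \<ge> real k + \<epsilon>"
  shows "(\<forall>i\<in>{1..k}.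
            (let L = (\<Inter>m. \<Union>n\<in>{m..}.
               {x \<in> space M. \<forall>z\<in>box n \<inter> Aclass i k.
                  J (g (real n)) (shift_edges origin_edges z) (\<lambda>e. w e x)})
             in L \<in> sets M \<and> measure M L = 0))
       \<and> (AE x in M. eventually (\<lambda>n. \<exists>Z. Z \<subseteq> box n \<and> card Z = k \<and>
              (\<forall>z\<in>Z. pi_site (\<lambda>e. w e x) z \<le> 2 * real CARD('d) * g (real n))) sequentially)"
proof -
  interpret P: prob_space M by (rule M)
  define E where "E i n = {x\<in>space M. \<forall>z\<in>box n \<inter> Aclass i k. \<exists>e\<in>star z. g (real n) < w e x}"
    for i n :: nat
  define L where "L i = (\<Inter>m. \<Union>n\<in>{m..}. E i n)" for i
  have Lnull: "L i \<in> null_sets M" for i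
    unfolding L_def E_def by (rule P.main_null[OF indep law g_mono k growth])
  have part1: "\<forall>i\<in>{1..k}.
            (let L = (\<Inter>m. \<Union>n\<in>{m..}.
               {x \<in> space M. \<forall>z\<in>box n \<inter> Aclass i k.
                  J (g (real n)) (shift_edges origin_edges z) (\<lambda>e. w e x)})
             in L \<in> sets M \<and> measure M L = 0)"
  proof
    fix i assume "i \<in> {1..k}"
    have "L i \<in> sets M" using Lnull[of i] by auto
    moreover have "measure M (L i) = 0" using Lnull[of i] by (simp add: measure_def null_setsD1)
    ultimately show "let L = (\<Inter>m. \<Union>n\<in>{m..}.
               {x \<in> space M. \<forall>z\<in>box n \<inter> Aclass i k.
                  J (g (real n)) (shift_edges origin_edges z) (\<lambda>e. w e x)})
             in L \<in> sets M \<and> measure M L = 0"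
      by (simp add: L_def E_def J_def Let_def)
  qed
  have N: "(\<Union>i\<in>{1..k}. L i) \<in> null_sets M" by (rule null_sets_UN') (auto intro: Lnull)
  have ae: "AE x in M. x \<notin> (\<Union>i\<in>{1..k}. L i)" by (rule AE_not_in[OF N])
  have "AE x in M. x \<notin> (\<Union>i\<in>{1..k}. L i) \<longrightarrow> eventually (\<lambda>n. \<exists>Z. Z \<subseteq> box n \<and> card Z = k \<and>
              (\<forall>z\<in>Z. pi_site (\<lambda>e. w e x) z \<le> 2 * real CARD('d) * g (real n))) sequentially"
  proof (rule AE_I2, rule impI)
    fix x assume x: "x \<in> space M" and nx: "x \<notin> (\<Union>i\<in>{1..k}. L i)"
    have evi: "eventually (\<lambda>n. x \<notin> E i n) sequentially" if i: "i \<in> {1..k}" for i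
    proof -
      have "x \<notin> L i" using nx i by blast
      then obtain m where "\<forall>n\<ge>m. x \<notin> E i n" unfolding L_def by blast
      then show ?thesis unfolding eventually_sequentially by blast
    qed
    have ev: "eventually (\<lambda>n. \<forall>i\<in>{1..k}. x \<notin> E i n) sequentially"
      by (rule eventually_ball_finite) (use evi in auto)
    have ev1: "eventually (\<lambda>n. (1::nat) \<le> n) sequentially" by (rule eventually_ge_at_top)
    show "eventually (\<lambda>n. \<exists>Z. Z \<subseteq> box n \<and> card Z = k \<and>
              (\<forall>z\<in>Z. pi_site (\<lambda>e. w e x) z \<le> 2 * real CARD('d) * g (real n))) sequentially"
    proof (rule eventually_mono[OF eventually_conj[OF ev ev1]])
      fix n :: nat assume h: "(\<forall>i\<in>{1..k}. x \<notin> E i n) \<and> 1 \<le> n"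
      have gn: "g (real n) > 0" using h g_pos by simp
      have ex: "\<forall>i\<in>{1..k}. \<exists>z. z \<in> box n \<inter> Aclass i k \<and> (\<forall>e\<in>star z. w e x \<le> g (real n))"
      proof
        fix i assume "i \<in> {1..k}"
        then have "x \<notin> E i n" using h by blast
        then show "\<exists>z. z \<in> box n \<inter> Aclass i k \<and> (\<forall>e\<in>star z. w e x \<le> g (real n))"
          using x by (auto simp: E_def not_less)
      qed
      then obtain zf where zf: "\<And>i. i \<in> {1..k} \<Longrightarrow> zf i \<in> box n \<inter> Aclass i k \<and> (\<forall>e\<in>star (zf i). w e x \<le> g (real n))"
        by metis
      have inj: "inj_on zf {1..k}"
      proof (rule inj_onI)
        fix i i' assume i: "i \<in> {1..k}" and i': "i' \<in> {1..k}" and e: "zf i = zf i'"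
        have "int i mod int k = int i' mod int k"
          using zf[OF i] zf[OF i'] e by (simp add: Aclass_def)
        then show "i = i'" by (rule class_inj[OF i i'])
      qed
      show "\<exists>Z. Z \<subseteq> box n \<and> card Z = k \<and>
              (\<forall>z\<in>Z. pi_site (\<lambda>e. w e x) z \<le> 2 * real CARD('d) * g (real n))"
      proof (intro exI conjI ballI)
        show "zf ` {1..k} \<subseteq> box n" using zf by blast
        show "card (zf ` {1..k}) = k" using card_image[OF inj] by simp
        fix z assume "z \<in> zf ` {1..k}"
        then obtain i where i: "i \<in> {1..k}" and z: "z = zf i" by blast
        have small: "\<forall>e\<in>star z. w e x \<le> g (real n)" using zf[OF i] z by blast
        have "pi_site (\<lambda>e. w e x) z = (\<Sum>y\<in>{y. nbr z y}. w {z, y} x)" by (simp add: pi_site_def)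
        also have "\<dots> \<le> (\<Sum>y\<in>{y. nbr z y}. g (real n))"
          by (rule sum_mono) (use small star_mem in blast)
        also have "\<dots> = real (card {y. nbr z y}) * g (real n)" by simp
        also have "\<dots> \<le> real (2 * CARD('d)) * g (real n)"
          using nbr_card[of z] gn by (intro mult_right_mono) auto
        finally show "pi_site (\<lambda>e. w e x) z \<le> 2 * real CARD('d) * g (real n)" by simp
      qed
    qed
  qed
  then have "AE x in M. eventually (\<lambda>n. \<exists>Z. Z \<subseteq> box n \<and> card Z = k \<and>
              (\<forall>z\<in>Z. pi_site (\<lambda>e. w e x) z \<le> 2 * real CARD('d) * g (real n))) sequentially"
    by (rule AE_mp[OF ae])
  then show ?thesis using part1 by blast
qed

end
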